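(* Let $d,T\ge 1$, let $0<b<c$, and let $x_1,\dots,x_T\in\mathbb{R}^d$ and $y_1,\dots,y_T\in\mathbb{R}$ be arbitrary. Assume the labels are bounded: $\sup_t |y_t|\le Y$ for some $Y\in\mathbb{R}$. Let $\hat y_1,\dots,\hat y_T$ be the predictions of the LASER algorithm (defined in the context). Then \[ \sum_{t=1}^T (y_t-\hat y_t)^2 \;\le\; \min_{u_1,\dots,u_T\in\mathbb{R}^d}\Big[\, b\|u_1\|^2 + c\sum_{t=1}^{T-1}\|u_t-u_{t+1}\|^2 + \sum_{t=1}^T (x_t^\top u_t - y_t)^2 \Big] \;+\; Y^2\sum_{t=1}^T x_t^\top D_t^{-1}x_t . \]
   Context: LASER algorithm: with parameters $0<b<c$, set $D_0=\frac{bc}{c-b}I\in\mathbb{R}^{d\times d}$ and $e_0=0\in\mathbb{R}^d$. For $t=1,\dots,T$: after receiving $x_t$, compute $D_t=\big(D_{t-1}^{-1}+c^{-1}I\big)^{-1}+x_tx_t^\top$; output the prediction $\hat y_t = x_t^\top D_t^{-1}\big(I+c^{-1}D_{t-1}\big)^{-1}e_{t-1}$; after receiving $y_t$, set $e_t=\big(I+c^{-1}D_{t-1}\big)^{-1}e_{t-1}+y_tx_t$. Here $I$ is the $d\times d$ identity and $\|\cdot\|$ the Euclidean norm. *)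

theory Defs
  imports "HOL-Analysis.Analysis"
begin

definition outer_self :: "real^'n \<Rightarrow> real^'n^'n" where
  "outer_self v = (\<chi> i j. v $ i * v $ j)"

text \<open>The LASER matrices D_t (t = 0,1,...); inputs x_1, x_2, ... are x 1, x 2, ...\<close>
fun laser_D :: "real \<Rightarrow> real \<Rightarrow> (nat \<Rightarrow> real^'n) \<Rightarrow> nat \<Rightarrow> real^'n^'n" where
  "laser_D b c x 0 = mat (b * c / (c - b))"
| "laser_D b c x (Suc t) =
     matrix_inv (matrix_inv (laser_D b c x t) + mat (1 / c)) + outer_self (x (Suc t))"

fun laser_e :: "real \<Rightarrow> real \<Rightarrow> (nat \<Rightarrow> real^'n) \<Rightarrow> (nat \<Rightarrow> real) \<Rightarrow> nat \<Rightarrow> real^'n" where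
  "laser_e b c x y 0 = 0"
| "laser_e b c x y (Suc t) =
     matrix_inv (mat 1 + (1 / c) *\<^sub>R laser_D b c x t) *v laser_e b c x y t + y (Suc t) *\<^sub>R x (Suc t)"

definition laser_pred :: "real \<Rightarrow> real \<Rightarrow> (nat \<Rightarrow> real^'n) \<Rightarrow> (nat \<Rightarrow> real) \<Rightarrow> nat \<Rightarrow> real" where
  "laser_pred b c x y t =
     x t \<bullet> (matrix_inv (laser_D b c x t) *v
              (matrix_inv (mat 1 + (1 / c) *\<^sub>R laser_D b c x (t - 1)) *v laser_e b c x y (t - 1)))"

end

theory Submission imports Defs begin

definition symm :: "real^'n^'n \<Rightarrow> bool" where "symm M \<longleftrightarrow> transpose M = M"
definition pd :: "real^'n^'n \<Rightarrow> bool" where "pd M \<longleftrightarrow> (\<forall>v. v \<noteq> 0 \<longrightarrow> 0 < v \<bullet> (M *v v))"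

lemma symm_dot: "symm M \<Longrightarrow> v \<bullet> (M *v w) = (M *v v) \<bullet> w"
  by (metis dot_lmul_matrix symm_def transpose_matrix_vector)

lemma inv_props:
  fixes M :: "real^'n^'n"
  assumes "invertible M"
  shows "M ** matrix_inv M = mat 1" "matrix_inv M ** M = mat 1"
proof -
  have "\<exists>A'. M ** A' = mat 1 \<and> A' ** M = mat 1" using assms invertible_def by blast
  from someI_ex[OF this] show "M ** matrix_inv M = mat 1" "matrix_inv M ** M = mat 1"
    unfolding matrix_inv_def by auto
qed

lemma inv_vec:
  fixes M :: "real^'n^'n"
  assumes "invertible M"
  shows "M *v (matrix_inv M *v v) = v" "matrix_inv M *v (M *v v) = v"
  by (simp_all add: matrix_vector_mul_assoc inv_props[OF assms])

lemma pd_invertible: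
  fixes M :: "real^'n^'n"
  assumes "pd M" shows "invertible M"
proof -
  have "\<forall>x. M *v x = 0 \<longrightarrow> x = 0"
    using assms unfolding pd_def by (metis inner_zero_right less_irrefl)
  then show ?thesis using invertible_left_inverse matrix_left_invertible_ker by blast
qed

lemma symm_inv:
  fixes M :: "real^'n^'n"
  assumes "symm M" "invertible M" shows "symm (matrix_inv M)"
proof -
  let ?N = "matrix_inv M"
  have "transpose ?N = transpose ?N ** (M ** ?N)" by (simp add: inv_props[OF assms(2)])
  also have "\<dots> = (transpose ?N ** transpose M) ** ?N"
    using assms(1) by (simp add: symm_def matrix_mul_assoc)
  also have "\<dots> = transpose (M ** ?N) ** ?N" by (simp add: matrix_transpose_mul)
  also have "\<dots> = ?N" by (simp add: inv_props[OF assms(2)])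
  finally show ?thesis unfolding symm_def .
qed

lemma pd_inv:
  fixes M :: "real^'n^'n"
  assumes "symm M" "pd M" shows "pd (matrix_inv M)"
  unfolding pd_def
proof (intro allI impI)
  fix v :: "real^'n" assume v: "v \<noteq> 0"
  have inv: "invertible M" using pd_invertible assms by blast
  let ?w = "matrix_inv M *v v"
  have w: "M *v ?w = v" using inv_vec[OF inv] by blast
  have "?w \<noteq> 0" using w v by auto
  then have "0 < ?w \<bullet> (M *v ?w)" using assms(2) pd_def by blast
  also have "?w \<bullet> (M *v ?w) = v \<bullet> ?w" using w by (simp add: inner_commute)
  finally show "0 < v \<bullet> (matrix_inv M *v v)" .
qed

lemma mat_vec: "(mat k :: real^'n^'n) *v v = k *\<^sub>R v"
  by (simp add: vec_eq_iff matrix_vector_mult_def mat_def if_distrib if_distribR cong del: if_weak_cong)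

lemma outer_vec: "outer_self x *v v = (x \<bullet> v) *\<^sub>R x"
  by (simp add: vec_eq_iff matrix_vector_mult_def outer_self_def inner_vec_def sum_distrib_left mult_ac)

lemma symm_outer: "symm (outer_self x)"
  by (simp add: symm_def outer_self_def transpose_def vec_eq_iff mult.commute)

lemma symm_mat: "symm (mat k)" by (simp add: symm_def)
lemma symm_add: "symm A \<Longrightarrow> symm B \<Longrightarrow> symm (A + B)"
  by (simp add: symm_def transpose_def vec_eq_iff)
lemma symm_scale: "symm A \<Longrightarrow> symm (k *\<^sub>R A)"
  by (simp add: symm_def transpose_scalar)

lemma pd_add_psd: "pd A \<Longrightarrow> (\<forall>v. 0 \<le> v \<bullet> (B *v v)) \<Longrightarrow> pd (A + B)"
  unfolding pd_def by (simp add: matrix_vector_mult_add_rdistrib inner_add_right add_pos_nonneg)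

lemma pd_mat: "0 < k \<Longrightarrow> pd (mat k)"
  unfolding pd_def by (simp add: mat_vec)


lemma psd_outer: "\<forall>v. 0 \<le> v \<bullet> (outer_self x *v v)"
  by (simp add: outer_vec inner_commute)

lemma pd_psd: "pd A \<Longrightarrow> 0 \<le> v \<bullet> (A *v v)"
  unfolding pd_def by (cases "v = 0") (auto intro: less_imp_le)


lemma infconv:
  fixes D :: "real^'n^'n"
  assumes sD: "symm D" and pD: "pd D" and c: "0 < c"
  shows "q \<bullet> (matrix_inv (matrix_inv D + mat (1/c)) *v q) \<le> p \<bullet> (D *v p) + c * (norm (p - q))\<^sup>2"
proof -
  let ?Di = "matrix_inv D"
  let ?M = "?Di + mat (1/c)"
  have iD: "invertible D" using pd_invertible pD by blast
  have sDi: "symm ?Di" using symm_inv sD iD by blast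
  have pDi: "pd ?Di" using pd_inv sD pD by blast
  have pM: "pd ?M" using pd_add_psd[OF pDi] c by (simp add: mat_vec)
  have iM: "invertible ?M" using pd_invertible pM by blast
  define s where "s = matrix_inv ?M *v q"
  have Ms: "?Di *v s + (1/c) *\<^sub>R s = q"
    using inv_vec(1)[OF iM, of q] unfolding s_def by (simp add: matrix_vector_mult_add_rdistrib mat_vec)
  define r where "r = ?Di *v s"
  have Dr: "D *v r = s" unfolding r_def using inv_vec(1)[OF iD] by blast
  have "0 \<le> (p - r) \<bullet> (D *v (p - r))" using pd_psd[OF pD] .
  also have "\<dots> = p \<bullet> (D *v p) - 2 * (p \<bullet> s) + r \<bullet> s"
    using symm_dot[OF sD, of r p] Dr
    by (simp add: matrix_vector_mult_diff_distrib inner_diff_left inner_diff_right inner_commute)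
  finally have i1: "0 \<le> p \<bullet> (D *v p) - 2 * (p \<bullet> s) + r \<bullet> s" .
  have "0 \<le> c * (norm ((q - p) - (1/c) *\<^sub>R s))\<^sup>2" using c by simp
  also have "\<dots> = c * (norm (q - p))\<^sup>2 - 2 * ((q - p) \<bullet> s) + (1/c) * (s \<bullet> s)"
    using c by (simp add: power2_norm_eq_inner inner_diff_left inner_diff_right inner_commute algebra_simps)
  finally have i2: "0 \<le> c * (norm (q - p))\<^sup>2 - 2 * ((q - p) \<bullet> s) + (1/c) * (s \<bullet> s)" .
  have qs: "q \<bullet> s = r \<bullet> s + (1/c) * (s \<bullet> s)"
    using Ms unfolding r_def by (metis inner_add_left inner_scaleR_left)
  have "norm (q - p) = norm (p - q)" by (simp add: norm_minus_commute)
  then show ?thesis using i1 i2 qs unfolding s_def[symmetric]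
    by (simp add: inner_diff_left inner_commute[of q s])
qed


definition QQ :: "real^'n^'n \<Rightarrow> real^'n \<Rightarrow> real^'n \<Rightarrow> real" where
  "QQ D e w = (w - matrix_inv D *v e) \<bullet> (D *v (w - matrix_inv D *v e))"

lemma QQ_expand:
  assumes "symm D" "invertible D"
  shows "QQ D e w = w \<bullet> (D *v w) - 2 * (w \<bullet> e) + (matrix_inv D *v e) \<bullet> e"
proof -
  have De: "D *v (matrix_inv D *v e) = e" using inv_vec(1)[OF assms(2)] .
  show ?thesis unfolding QQ_def
    using symm_dot[OF assms(1), of "matrix_inv D *v e" w] De
    by (simp add: matrix_vector_mult_diff_distrib inner_diff_left inner_diff_right inner_commute)
qed

lemma local_step:
  fixes D :: "real^'n^'n" and x e v w :: "real^'n" and c y Y :: real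
  assumes sD: "symm D" and pD: "pd D" and c: "0 < c" and yY: "y\<^sup>2 \<le> Y\<^sup>2"
  defines "A \<equiv> matrix_inv (matrix_inv D + mat (1/c))"
  defines "Dn \<equiv> A + outer_self x"
  defines "et \<equiv> matrix_inv (mat 1 + (1/c) *\<^sub>R D) *v e"
  shows "(y - x \<bullet> (matrix_inv Dn *v et))\<^sup>2 - Y\<^sup>2 * (x \<bullet> (matrix_inv Dn *v x))
          + QQ Dn (et + y *\<^sub>R x) w
         \<le> QQ D e v + c * (norm (v - w))\<^sup>2 + (x \<bullet> w - y)\<^sup>2"
proof -
  let ?Di = "matrix_inv D"
  let ?M = "?Di + mat (1/c)"
  define m where "m = ?Di *v e"
  have iD: "invertible D" using pd_invertible pD by blast
  have sDi: "symm ?Di" using symm_inv sD iD by blast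
  have pDi: "pd ?Di" using pd_inv sD pD by blast
  have pM: "pd ?M" using pd_add_psd[OF pDi] c by (simp add: mat_vec)
  have sM: "symm ?M" using symm_add[OF sDi symm_mat] .
  have iM: "invertible ?M" using pd_invertible pM by blast
  have sA: "symm A" unfolding A_def using symm_inv[OF sM iM] .
  have pA: "pd A" unfolding A_def using pd_inv[OF sM pM] .
  have iA: "invertible A" using pd_invertible pA by blast
  have AM: "\<And>z. A *v (?M *v z) = z"
  proof -
    fix z
    have "A *v (?M *v z) = (A ** ?M) *v z" by (simp add: matrix_vector_mul_assoc)
    also have "A ** ?M = mat 1" unfolding A_def using inv_props(2)[OF iM] .
    finally show "A *v (?M *v z) = z" by simp
  qed
  have MA: "\<And>z. ?M *v (A *v z) = z" unfolding A_def using inv_vec(1)[OF iM] by blast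
  have sDn: "symm Dn" unfolding Dn_def using symm_add[OF sA symm_outer] .
  have pDn: "pd Dn" unfolding Dn_def using pd_add_psd[OF pA psd_outer] .
  have iDn: "invertible Dn" using pd_invertible pDn by blast
  let ?Dni = "matrix_inv Dn"
  have sDni: "symm ?Dni" using symm_inv sDn iDn by blast
  have pDni: "pd ?Dni" using pd_inv sDn pDn by blast
  let ?N = "mat 1 + (1/c) *\<^sub>R D"
  have pN: "pd ?N"
    using pd_add_psd[OF pd_mat[of 1], of "(1/c) *\<^sub>R D"] pd_psd[OF pD] c
    by (simp add: scaleR_matrix_vector_assoc[symmetric])
  have iN: "invertible ?N" using pd_invertible pN by blast
  have Net: "et + (1/c) *\<^sub>R (D *v et) = e"
    using inv_vec(1)[OF iN, of e] unfolding et_def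
    by (simp add: matrix_vector_mult_add_rdistrib scaleR_matrix_vector_assoc[symmetric])
  have Met: "?M *v et = m"
  proof -
    have "?M *v et = ?Di *v et + (1/c) *\<^sub>R et" by (simp add: matrix_vector_mult_add_rdistrib mat_vec)
    also have "\<dots> = ?Di *v (et + (1/c) *\<^sub>R (D *v et))"
      using inv_vec(2)[OF iD, of et] by (simp add: matrix_vector_right_distrib matrix_vector_mult_scaleR)
    also have "\<dots> = m" using Net m_def by simp
    finally show ?thesis .
  qed
  have et_eq: "A *v m = et" using AM[of et] Met by simp
  define g where "g = ?Dni *v et"
  define h where "h = ?Dni *v x"
  define P where "P = x \<bullet> g"
  define R where "R = x \<bullet> h"
  define K where "K = x \<bullet> (?M *v x)"
  define G where "G = g \<bullet> et"
  define WAW where "WAW = w \<bullet> (A *v w)"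
  define XW where "XW = x \<bullet> w"
  define WET where "WET = w \<bullet> et"
  have Dng: "A *v g + P *\<^sub>R x = et"
    using inv_vec(1)[OF iDn, of et] unfolding g_def P_def Dn_def
    by (simp add: matrix_vector_mult_add_rdistrib outer_vec)
  have mg: "g + P *\<^sub>R (?M *v x) = m"
  proof -
    have "?M *v (A *v g + P *\<^sub>R x) = ?M *v et" using Dng by simp
    then show ?thesis using MA[of g] Met by (simp add: matrix_vector_right_distrib matrix_vector_mult_scaleR)
  qed
  have R0: "0 \<le> R" unfolding R_def h_def using pd_psd[OF pDni] .
  have K0: "0 \<le> K" unfolding K_def using pd_psd[OF pM] .
  have e1: "QQ D e v + c * (norm (v - w))\<^sup>2 \<ge> (w - m) \<bullet> (A *v (w - m))"
  proof -
    have "(w - m) \<bullet> (A *v (w - m)) \<le> (v - m) \<bullet> (D *v (v - m)) + c * (norm ((v - m) - (w - m)))\<^sup>2"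
      unfolding A_def using infconv[OF sD pD c] by blast
    then show ?thesis unfolding QQ_def m_def by simp
  qed
  have e2: "(w - m) \<bullet> (A *v (w - m)) = WAW - 2 * WET + m \<bullet> et"
    using symm_dot[OF sA, of m w] et_eq unfolding WAW_def WET_def
    by (simp add: matrix_vector_mult_diff_distrib inner_diff_left inner_diff_right inner_commute)
  have e3: "m \<bullet> et = G + P * (P + P * K)"
  proof -
    have xm: "x \<bullet> m = P + P * K" using mg unfolding P_def K_def
      by (metis inner_add_right inner_scaleR_right mult.commute)
    have "m \<bullet> et = G + P * ((?M *v x) \<bullet> et)" using mg unfolding G_def
      by (metis inner_add_left inner_scaleR_left)
    also have "(?M *v x) \<bullet> et = x \<bullet> m" using symm_dot[OF sM, of x et] Met by simp
    finally show ?thesis using xm by simp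
  qed
  have e4: "QQ Dn (et + y *\<^sub>R x) w = WAW + XW\<^sup>2 - 2 * (WET + y * XW) + (G + 2 * y * P + y\<^sup>2 * R)"
  proof -
    have a: "w \<bullet> (Dn *v w) = WAW + XW\<^sup>2" unfolding Dn_def WAW_def XW_def
      by (simp add: matrix_vector_mult_add_rdistrib outer_vec inner_add_right power2_eq_square inner_commute)
    have hg: "h \<bullet> et = P" using symm_dot[OF sDni, of x et] unfolding h_def g_def P_def by simp
    have b: "(?Dni *v (et + y *\<^sub>R x)) \<bullet> (et + y *\<^sub>R x) = G + 2 * y * P + y\<^sup>2 * R"
    proof -
      have "?Dni *v (et + y *\<^sub>R x) = g + y *\<^sub>R h" unfolding g_def h_def
        by (simp add: matrix_vector_right_distrib matrix_vector_mult_scaleR)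
      then show ?thesis using hg unfolding G_def P_def R_def
        by (simp add: inner_add_left inner_add_right inner_commute power2_eq_square algebra_simps)
    qed
    show ?thesis using QQ_expand[OF sDn iDn] a b unfolding WET_def XW_def
      by (simp add: inner_add_right inner_commute)
  qed
  have key: "(y - P)\<^sup>2 - Y\<^sup>2 * R + (WAW + XW\<^sup>2 - 2 * (WET + y * XW) + (G + 2 * y * P + y\<^sup>2 * R))
     - (WAW - 2 * WET + (G + P * (P + P * K)) + (XW - y)\<^sup>2) = (y\<^sup>2 - Y\<^sup>2) * R - P\<^sup>2 * K"
    by (simp add: power2_eq_square algebra_simps)
  have "(y\<^sup>2 - Y\<^sup>2) * R \<le> 0" using yY R0 by (simp add: mult_nonpos_nonneg)
  moreover have "0 \<le> P\<^sup>2 * K" using K0 by simp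
  ultimately show ?thesis using key e1 e2 e3 e4 unfolding P_def[symmetric] g_def[symmetric]
      h_def[symmetric] R_def[symmetric] XW_def[symmetric]
    by linarith
qed


lemma D_pd:
  assumes "0 < b" "b < c"
  shows "symm (laser_D b c x t) \<and> pd (laser_D b c x t)"
proof (induction t)
  case 0
  have "0 < b * c / (c - b)" using assms by simp
  then show ?case by (simp add: symm_mat pd_mat)
next
  case (Suc t)
  let ?D = "laser_D b c x t"
  have iD: "invertible ?D" using pd_invertible Suc by blast
  have sDi: "symm (matrix_inv ?D)" using symm_inv Suc iD by blast
  have pDi: "pd (matrix_inv ?D)" using pd_inv Suc by blast
  have pM: "pd (matrix_inv ?D + mat (1/c))" using pd_add_psd[OF pDi] assms by (simp add: mat_vec)
  have sM: "symm (matrix_inv ?D + mat (1/c))" using symm_add[OF sDi symm_mat] .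
  have sA: "symm (matrix_inv (matrix_inv ?D + mat (1/c)))"
    using symm_inv[OF sM] pd_invertible[OF pM] by blast
  have pA: "pd (matrix_inv (matrix_inv ?D + mat (1/c)))" using pd_inv[OF sM pM] .
  show ?case using symm_add[OF sA symm_outer] pd_add_psd[OF pA psd_outer] by simp
qed

lemma invariant:
  fixes b c Y :: real and T :: nat
    and x :: "nat \<Rightarrow> real^'d" and y :: "nat \<Rightarrow> real" and u :: "nat \<Rightarrow> real^'d"
  assumes "0 < b" and "b < c"
    and "\<forall>t\<in>{1..T}. \<bar>y t\<bar> \<le> Y"
  shows "t \<le> T \<Longrightarrow> (\<Sum>s = 1..t. (y s - laser_pred b c x y s)\<^sup>2 - Y\<^sup>2 * (x s \<bullet> (matrix_inv (laser_D b c x s) *v x s)))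
      + QQ (laser_D b c x t) (laser_e b c x y t) (u t)
    \<le> (b * c / (c - b)) * (norm (u 0))\<^sup>2 + c * (\<Sum>s<t. (norm (u s - u (Suc s)))\<^sup>2)
      + (\<Sum>s = 1..t. (x s \<bullet> u s - y s)\<^sup>2)"
proof (induction t)
  case 0
  then show ?case by (simp add: QQ_def mat_vec power2_norm_eq_inner)
next
  case (Suc t)
  have c: "0 < c" using assms by simp
  have yY: "(y (Suc t))\<^sup>2 \<le> Y\<^sup>2" using assms(3) Suc.prems
    by (metis abs_le_square_iff abs_of_nonneg atLeastAtMost_iff abs_ge_zero le_add1 order_trans plus_1_eq_Suc)
  have DD: "symm (laser_D b c x t)" "pd (laser_D b c x t)" using D_pd[OF assms(1,2)] by auto
  have st: "(y (Suc t) - laser_pred b c x y (Suc t))\<^sup>2 - Y\<^sup>2 * (x (Suc t) \<bullet> (matrix_inv (laser_D b c x (Suc t)) *v x (Suc t)))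
      + QQ (laser_D b c x (Suc t)) (laser_e b c x y (Suc t)) (u (Suc t))
      \<le> QQ (laser_D b c x t) (laser_e b c x y t) (u t) + c * (norm (u t - u (Suc t)))\<^sup>2
        + (x (Suc t) \<bullet> u (Suc t) - y (Suc t))\<^sup>2"
    using local_step[OF DD c yY, of "x (Suc t)" "laser_e b c x y t" "u (Suc t)" "u t"]
    by (simp add: laser_pred_def)
  have IH: "(\<Sum>s = 1..t. (y s - laser_pred b c x y s)\<^sup>2 - Y\<^sup>2 * (x s \<bullet> (matrix_inv (laser_D b c x s) *v x s)))
      + QQ (laser_D b c x t) (laser_e b c x y t) (u t)
    \<le> (b * c / (c - b)) * (norm (u 0))\<^sup>2 + c * (\<Sum>s<t. (norm (u s - u (Suc s)))\<^sup>2)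
      + (\<Sum>s = 1..t. (x s \<bullet> u s - y s)\<^sup>2)" using Suc by simp
  show ?case using IH st by (simp add: distrib_left)
qed


theorem theorem4:
  fixes b c Y :: real and T :: nat
    and x :: "nat \<Rightarrow> real^'d" and y :: "nat \<Rightarrow> real"
  assumes "T \<ge> 1" and "0 < b" and "b < c"
    and "\<forall>t\<in>{1..T}. \<bar>y t\<bar> \<le> Y"
  shows "\<forall>u :: nat \<Rightarrow> real^'d.
           (\<Sum>t = 1..T. (y t - laser_pred b c x y t)\<^sup>2)
           \<le> b * (norm (u 1))\<^sup>2 + c * (\<Sum>t = 1..<T. (norm (u t - u (Suc t)))\<^sup>2)
             + (\<Sum>t = 1..T. (x t \<bullet> u t - y t)\<^sup>2)
             + Y\<^sup>2 * (\<Sum>t = 1..T. x t \<bullet> (matrix_inv (laser_D b c x t) *v x t))"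
proof
  fix u :: "nat \<Rightarrow> real^'d"
  define k where "k = (c - b) / c"
  define u' where "u' = u(0 := k *\<^sub>R u 1)"
  have inv: "(\<Sum>s = 1..T. (y s - laser_pred b c x y s)\<^sup>2 - Y\<^sup>2 * (x s \<bullet> (matrix_inv (laser_D b c x s) *v x s)))
      + QQ (laser_D b c x T) (laser_e b c x y T) (u' T)
    \<le> (b * c / (c - b)) * (norm (u' 0))\<^sup>2 + c * (\<Sum>s<T. (norm (u' s - u' (Suc s)))\<^sup>2)
      + (\<Sum>s = 1..T. (x s \<bullet> u' s - y s)\<^sup>2)"
    using invariant[OF assms(2,3,4)] by blast
  have q0: "0 \<le> QQ (laser_D b c x T) (laser_e b c x y T) (u' T)"
    unfolding QQ_def using pd_psd D_pd[OF assms(2,3)] by blast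
  have s1: "(\<Sum>s = 1..T. (x s \<bullet> u' s - y s)\<^sup>2) = (\<Sum>s = 1..T. (x s \<bullet> u s - y s)\<^sup>2)"
    by (rule sum.cong) (auto simp: u'_def)
  have s2: "(\<Sum>s<T. (norm (u' s - u' (Suc s)))\<^sup>2) = (norm (u' 0 - u 1))\<^sup>2 + (\<Sum>t = 1..<T. (norm (u t - u (Suc t)))\<^sup>2)"
  proof -
    have "(\<Sum>s<T. (norm (u' s - u' (Suc s)))\<^sup>2) = (\<Sum>s=0..<T. (norm (u' s - u' (Suc s)))\<^sup>2)"
      by (simp add: lessThan_atLeast0)
    also have "\<dots> = (norm (u' 0 - u' 1))\<^sup>2 + (\<Sum>s=Suc 0..<T. (norm (u' s - u' (Suc s)))\<^sup>2)"
      using assms(1) by (subst sum.atLeast_Suc_lessThan) auto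
    also have "(\<Sum>s=Suc 0..<T. (norm (u' s - u' (Suc s)))\<^sup>2) = (\<Sum>t = 1..<T. (norm (u t - u (Suc t)))\<^sup>2)"
      by (rule sum.cong) (auto simp: u'_def)
    finally show ?thesis by (simp add: u'_def)
  qed
  have s3: "(b * c / (c - b)) * (norm (u' 0))\<^sup>2 + c * (norm (u' 0 - u 1))\<^sup>2 = b * (norm (u 1))\<^sup>2"
  proof -
    have "u' 0 - u 1 = (k - 1) *\<^sub>R u 1" by (simp add: u'_def algebra_simps)
    then have n1: "(norm (u' 0 - u 1))\<^sup>2 = (k - 1)\<^sup>2 * (norm (u 1))\<^sup>2"
      by (simp add: power_mult_distrib)
    have n0: "(norm (u' 0))\<^sup>2 = k\<^sup>2 * (norm (u 1))\<^sup>2"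
      by (simp add: u'_def power_mult_distrib)
    have "(b * c / (c - b)) * (norm (u' 0))\<^sup>2 + c * (norm (u' 0 - u 1))\<^sup>2
        = ((b * c / (c - b)) * k\<^sup>2 + c * (k - 1)\<^sup>2) * (norm (u 1))\<^sup>2"
      unfolding n0 n1 by (simp add: algebra_simps)
    also have "(b * c / (c - b)) * k\<^sup>2 + c * (k - 1)\<^sup>2 = b"
      using assms(2,3) unfolding k_def by (simp add: field_simps power2_eq_square)
    finally show ?thesis .
  qed
  have s4: "(\<Sum>s = 1..T. (y s - laser_pred b c x y s)\<^sup>2 - Y\<^sup>2 * (x s \<bullet> (matrix_inv (laser_D b c x s) *v x s)))
     = (\<Sum>t = 1..T. (y t - laser_pred b c x y t)\<^sup>2) - Y\<^sup>2 * (\<Sum>t = 1..T. x t \<bullet> (matrix_inv (laser_D b c x t) *v x t))"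
    by (simp add: sum_subtractf sum_distrib_left)
  show "(\<Sum>t = 1..T. (y t - laser_pred b c x y t)\<^sup>2)
           \<le> b * (norm (u 1))\<^sup>2 + c * (\<Sum>t = 1..<T. (norm (u t - u (Suc t)))\<^sup>2)
             + (\<Sum>t = 1..T. (x t \<bullet> u t - y t)\<^sup>2)
             + Y\<^sup>2 * (\<Sum>t = 1..T. x t \<bullet> (matrix_inv (laser_D b c x t) *v x t))"
    using inv q0 s1 s2 s3 s4 by (simp add: distrib_left)
qed

end
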